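(* Let $\mathcal{W}$ be a nonempty set and let $\mathcal{R}$ be a set of binary relations on $\mathcal{W}$ (subsets of $\mathcal{W}\times\mathcal{W}$) that is closed under composition $\circ$, where $r \circ r' = \{(w,w') : \exists w'' \in \mathcal{W},\ (w,w'') \in r \text{ and } (w'',w') \in r'\}$. Suppose $\mathcal{R}$ contains a relation $r$ of nontrivial finite order, i.e., there is an integer $n$ with $1 < n < \infty$ such that $r^n = r \circ \cdots \circ r$ ($n$ times) equals the identity relation $e = \{(w,w) : w \in \mathcal{W}\}$ and $r^k \neq e$ for $0<k<n$. Let $F$ be a field of characteristic $0$ (e.g. $\mathbb{R}$ or $\mathbb{C}$). Then there is no $F$-vector space $\mathbb{V}$ and map $\varphi : \mathcal{W} \to \mathbb{V}$ such that $(\mathcal{W}, \mathcal{R}, \mathbb{V}, \varphi)$ is a relation-as-vector representation that well-represents $\mathcal{R}$.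
   Context: Given a set of words $\mathcal{W}$, a set $\mathcal{R}$ of binary relations on $\mathcal{W}$, a vector space $\mathbb{V}$ and a map $\varphi : \mathcal{W} \to \mathbb{V}$, the tuple $(\mathcal{W}, \mathcal{R}, \mathbb{V}, \varphi)$ is called a relation-as-vector representation if for every $r \in \mathcal{R}$ and all $a,b,c,d \in \mathcal{W}$ with $(a,b) \in r$ and $(c,d) \in r$ one has $\varphi(b) - \varphi(a) = \varphi(d) - \varphi(c)$; this common vector is denoted $\varphi(r) = \varphi(b)-\varphi(a)$. The set $\mathcal{R}$ is well-represented by such a representation if $\varphi(r) \neq \varphi(r')$ for all distinct $r, r' \in \mathcal{R}$. The order of $r$ refers to its order as an element of $(\mathcal{R}, \circ)$ with identity the identity relation. *)

theory Defs
  imports Main "HOL.Vector_Spaces"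
begin

definition rel_as_vec_rep :: "('w \<times> 'w) set set \<Rightarrow> ('w \<Rightarrow> 'v::ab_group_add) \<Rightarrow> bool" where
  "rel_as_vec_rep R \<phi> \<longleftrightarrow>
     (\<forall>r\<in>R. \<forall>a b c d. (a, b) \<in> r \<longrightarrow> (c, d) \<in> r \<longrightarrow> \<phi> b - \<phi> a = \<phi> d - \<phi> c)"

definition rel_vec :: "('w \<Rightarrow> 'v::ab_group_add) \<Rightarrow> ('w \<times> 'w) set \<Rightarrow> 'v" where
  "rel_vec \<phi> r = (SOME v. \<exists>(a, b)\<in>r. v = \<phi> b - \<phi> a)"

definition well_represents :: "('w \<times> 'w) set set \<Rightarrow> ('w \<Rightarrow> 'v::ab_group_add) \<Rightarrow> bool" where
  "well_represents R \<phi> \<longleftrightarrow> (\<forall>r\<in>R. \<forall>r'\<in>R. r \<noteq> r' \<longrightarrow> rel_vec \<phi> r \<noteq> rel_vec \<phi> r')"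

end

theory Submission
  imports Defs
begin

lemma relpow_in_R:
  assumes "\<forall>s\<in>R. \<forall>t\<in>R. s O t \<in> R" "r \<in> R"
  shows "r ^^ Suc k \<in> R"
proof (induction k)
  case 0 then show ?case using assms by simp
next
  case (Suc k)
  have "r ^^ Suc (Suc k) = r ^^ Suc k O r" by (rule relpow.simps(2))
  then show ?case using Suc assms by simp
qed

lemma rel_vec_eq:
  assumes "rel_as_vec_rep R \<phi>" "r \<in> R" "(a, b) \<in> r"
  shows "rel_vec \<phi> r = \<phi> b - \<phi> a"
proof -
  have "\<exists>v. \<exists>(a, b)\<in>r. v = \<phi> b - \<phi> a" using assms(3) by blast
  then have "\<exists>(c, d)\<in>r. rel_vec \<phi> r = \<phi> d - \<phi> c"
    unfolding rel_vec_def by (rule someI_ex)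
  then obtain c d where "(c,d) \<in> r" "rel_vec \<phi> r = \<phi> d - \<phi> c" by blast
  moreover have "\<phi> b - \<phi> a = \<phi> d - \<phi> c"
    using assms \<open>(c,d) \<in> r\<close> unfolding rel_as_vec_rep_def by blast
  ultimately show ?thesis by simp
qed

lemma relpow_diff:
  fixes \<phi> :: "'w \<Rightarrow> 'v::ab_group_add"
  assumes "\<forall>a b. (a, b) \<in> r \<longrightarrow> \<phi> b - \<phi> a = v"
  shows "(a, b) \<in> r ^^ k \<Longrightarrow> \<phi> b - \<phi> a = (\<Sum>_<k. v)"
proof (induction k arbitrary: b)
  case 0 then show ?case by simp
next
  case (Suc k)
  then obtain y where "(a, y) \<in> r ^^ k" "(y, b) \<in> r" by (meson relpow_Suc_E)
  then have "\<phi> y - \<phi> a = (\<Sum>_<k. v)" "\<phi> b - \<phi> y = v" using Suc assms by auto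
  then have "\<phi> b - \<phi> a = (\<Sum>_<k. v) + v" by (simp add: algebra_simps)
  then show ?case by simp
qed

theorem theorem1:
  fixes W :: "'w set" and R :: "('w \<times> 'w) set set" and r :: "('w \<times> 'w) set" and n :: nat
  assumes "W \<noteq> {}"
    and "\<forall>s\<in>R. s \<subseteq> W \<times> W"
    and "\<forall>s\<in>R. \<forall>t\<in>R. s O t \<in> R"
    and "r \<in> R"
    and "1 < n"
    and "r ^^ n = Id_on W"
    and "\<forall>k. 0 < k \<and> k < n \<longrightarrow> r ^^ k \<noteq> Id_on W"
  shows "\<not> (\<exists>(scale :: 'f::field_char_0 \<Rightarrow> 'v::ab_group_add \<Rightarrow> 'v) (\<phi> :: 'w \<Rightarrow> 'v).
            vector_space scale \<and> rel_as_vec_rep R \<phi> \<and> well_represents R \<phi>)"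
proof
  assume "\<exists>(scale :: 'f::field_char_0 \<Rightarrow> 'v::ab_group_add \<Rightarrow> 'v) (\<phi> :: 'w \<Rightarrow> 'v).
            vector_space scale \<and> rel_as_vec_rep R \<phi> \<and> well_represents R \<phi>"
  then obtain scale :: "'f \<Rightarrow> 'v \<Rightarrow> 'v" and \<phi> :: "'w \<Rightarrow> 'v" where
    vs: "vector_space scale" and rep: "rel_as_vec_rep R \<phi>" and wr: "well_represents R \<phi>" by blast
  obtain w where w: "w \<in> W" using assms(1) by blast
  have IdR: "Id_on W \<in> R"
  proof -
    have "Suc (n - 1) = n" using assms(5) by simp
    then show ?thesis using relpow_in_R[OF assms(3,4), of "n - 1"] assms(6) by simp
  qed
  have rne: "r \<noteq> Id_on W" using assms(7)[rule_format, of 1] assms(5) by simp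
  have "(w, w) \<in> r ^^ n" using assms(6) w by auto
  define v where "v = rel_vec \<phi> r"
  have rv: "\<forall>a b. (a, b) \<in> r \<longrightarrow> \<phi> b - \<phi> a = v"
    unfolding v_def using rel_vec_eq[OF rep assms(4)] by simp
  have "\<phi> w - \<phi> w = (\<Sum>_<n. v)" using relpow_diff[OF rv \<open>(w, w) \<in> r ^^ n\<close>] .
  then have s0: "(\<Sum>_<n. v) = 0" by simp
  interpret vector_space scale by (rule vs)
  have "scale (of_nat n) v = scale (\<Sum>_<n. 1) v" by simp
  also have "\<dots> = (\<Sum>_<n. v)" by (simp only: scale_sum_left scale_one)
  finally have "scale (of_nat n) v = 0" using s0 by simp
  then have v0: "v = 0" using assms(5) by simp
  have "rel_vec \<phi> (Id_on W) = \<phi> w - \<phi> w" using rel_vec_eq[OF rep IdR, of w w] w by auto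
  then have "rel_vec \<phi> (Id_on W) = rel_vec \<phi> r" using v0 v_def by simp
  moreover have "rel_vec \<phi> (Id_on W) \<noteq> rel_vec \<phi> r"
    using wr IdR assms(4) rne unfolding well_represents_def by simp
  ultimately show False by contradiction
qed

end
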